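(* Let $n\ge r\ge2$ be integers. Then $$B_n^{(r)}(x)=-2\,r^{n-1}\sum_{\substack{k\ge0\\ 2k+1\le r-1}}r^{-2k}\,\frac{s(r,r-2k-1)}{2k+1}\,\frac{\binom{n}{2k}}{\binom{r-1}{2k+1}}\,B_{n-2k}\!\left(\frac{x}{r}\right)\;-\;2\,r^{n-1}\sum_{\substack{k:\ 2k+1\ge r\\ 2k\le n}}r^{-2k}\,\frac{B^{(r)}_{2k+1}}{2k+1}\binom{n}{2k}B_{n-2k}\!\left(\frac{x}{r}\right),$$ where for $2k+1\ge r$, $$\frac{B^{(r)}_{2k+1}}{2k+1}=\binom{2k}{r-1}\sum_{j=1}^{r}(-1)^{j-1}s(r,j)\,\frac{B_{2k+1-r+j}}{2k+1-r+j}.$$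
   Context: For a positive integer $r$, the Bernoulli polynomials of order $r$ are defined by $\sum_{n\ge0}B_n^{(r)}(x)\frac{t^n}{n!}=\left(\frac{t}{e^t-1}\right)^re^{xt}$, and $B_n^{(r)}=B_n^{(r)}(0)$. $B_n(x)=B_n^{(1)}(x)$ are the Bernoulli polynomials and $B_m=B_m(0)$ the Bernoulli numbers. $s(n,l)$ denotes the (signed) Stirling numbers of the first kind, $x(x-1)\cdots(x-n+1)=\sum_l s(n,l)x^l$. *)

theory Defs
  imports "HOL-Computational_Algebra.Formal_Power_Series" "HOL-Combinatorics.Stirling"
begin

text \<open>The power series t/(e^t - 1), written as the inverse of (e^t - 1)/t.\<close>
definition bern_gf :: "real fps" where
  "bern_gf = inverse (fps_shift 1 (fps_exp 1 - 1))"

definition bernpoly_ord :: "nat \<Rightarrow> nat \<Rightarrow> real \<Rightarrow> real" where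
  "bernpoly_ord r n x = fact n * fps_nth (bern_gf ^ r * fps_exp x) n"

definition bernnum_ord :: "nat \<Rightarrow> nat \<Rightarrow> real" where
  "bernnum_ord r n = bernpoly_ord r n 0"

definition bernpoly :: "nat \<Rightarrow> real \<Rightarrow> real" where
  "bernpoly n x = bernpoly_ord 1 n x"

definition bernnum :: "nat \<Rightarrow> real" where
  "bernnum m = bernpoly m 0"

definition sstirling :: "nat \<Rightarrow> nat \<Rightarrow> real" where
  "sstirling n l = (-1) ^ (n - l) * real (stirling n l)"

end

theory Submission
  imports Defs
begin

unbundle fps_syntax


abbreviation GG :: "real fps" where "GG \<equiv> fps_shift 1 (fps_exp 1 - 1)"

lemma GG_nth: "GG $ n = 1 / fact (Suc n)"
  by (simp add: algebra_simps)

lemma GG_0: "GG $ 0 = 1" by simp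

lemma XGG: "fps_X * GG = fps_exp 1 - 1"
  by (rule fps_ext) (auto simp: fps_exp_def)

lemma F_G: "bern_gf * GG = 1"
  unfolding bern_gf_def by (rule inverse_mult_eq_1) simp

lemma F_G': "bern_gf * fps_shift (Suc 0) (fps_exp 1 - 1) = 1"
  using F_G by simp

lemma F_0: "bern_gf $ 0 = 1"
proof -
  have "(bern_gf * GG) $ 0 = 1" using F_G by simp
  thus ?thesis by (simp add: fps_mult_nth)
qed

definition sc :: "real \<Rightarrow> real fps \<Rightarrow> real fps" where
  "sc c f = Abs_fps (\<lambda>n. c ^ n * f $ n)"

lemma sc_nth [simp]: "sc c f $ n = c ^ n * f $ n"
  by (simp add: sc_def)

lemma sc_mult: "sc c (f * g) = sc c f * sc c g"
proof (rule fps_ext)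
  fix n
  have "sc c (f * g) $ n = (\<Sum>i=0..n. c ^ i * f $ i * (c ^ (n - i) * g $ (n - i)))"
    by (simp add: fps_mult_nth sum_distrib_left)
      (rule sum.cong, simp_all add: algebra_simps power_add[symmetric])
  thus "sc c (f * g) $ n = (sc c f * sc c g) $ n"
    by (simp add: fps_mult_nth)
qed

lemma sc_one [simp]: "sc c 1 = 1"
  by (rule fps_ext) simp

lemma sc_power: "sc c (f ^ k) = (sc c f) ^ k"
  by (induction k) (simp_all add: sc_mult)

lemma sc_exp: "sc c (fps_exp a) = fps_exp (c * a)"
  by (rule fps_ext) (simp add: power_mult_distrib)

lemma sc_diff: "sc c (f - g) = sc c f - sc c g"
  by (rule fps_ext) (simp add: algebra_simps)

lemma sc_X: "sc c (fps_X * f) = fps_const c * fps_X * sc c f"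
proof (rule fps_ext)
  fix n show "sc c (fps_X * f) $ n = (fps_const c * fps_X * sc c f) $ n"
    by (cases n) (simp_all add: mult.assoc fps_mult_left_const_nth)
qed

lemma X_cancel: "fps_X * (a::real fps) = fps_X * b \<Longrightarrow> a = b"
proof (rule fps_ext)
  fix n assume "fps_X * a = fps_X * b"
  hence "(fps_X * a) $ Suc n = (fps_X * b) $ Suc n" by simp
  thus "a $ n = b $ n" by simp
qed

lemma sc_F_G: "sc c bern_gf * sc c GG = 1"
  by (simp only: sc_mult[symmetric] F_G sc_one)

lemma altG: "sc (-1) GG * fps_exp 1 = GG"
proof -
  have "fps_X * sc (-1) GG = - sc (-1) (fps_X * GG)"
    by (simp add: sc_X fps_eq_iff mult.assoc)
  also have "\<dots> = 1 - fps_exp (-1)"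
    by (simp only: XGG) (simp add: sc_diff sc_exp)
  finally have 1: "fps_X * sc (-1) GG = 1 - fps_exp (-1)" .
  have "fps_X * (sc (-1) GG * fps_exp 1) = (1 - fps_exp (-1)) * fps_exp 1"
    by (simp add: 1[symmetric] mult.assoc)
  also have "\<dots> = fps_exp 1 - 1"
    by (simp add: algebra_simps fps_exp_add_mult[symmetric])
  also have "\<dots> = fps_X * GG" by (simp only: XGG)
  finally show ?thesis by (rule X_cancel)
qed

lemma altF: "sc (-1) bern_gf = bern_gf * fps_exp 1"
proof -
  have a: "inverse (sc (-1) GG) = sc (-1) bern_gf"
    by (rule fps_inverse_unique) (metis sc_F_G mult.commute)
  have "sc (-1) GG * (bern_gf * fps_exp 1) = bern_gf * (sc (-1) GG * fps_exp 1)"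
    by (simp only: ac_simps)
  also have "\<dots> = 1" by (simp only: altG F_G)
  finally have "inverse (sc (-1) GG) = bern_gf * fps_exp 1"
    by (rule fps_inverse_unique)
  with a show ?thesis by simp
qed

definition oddp :: "nat \<Rightarrow> real fps" where
  "oddp r = Abs_fps (\<lambda>n. if even n then (bern_gf ^ r) $ (n + 1) else 0)"

lemma altFr: "sc (-1) (bern_gf ^ r) = bern_gf ^ r * fps_exp (real r)"
  by (simp add: sc_power altF power_mult_distrib fps_exp_power_mult)

lemma OO_eq: "fps_const 2 * fps_X * oddp r = bern_gf ^ r - sc (-1) (bern_gf ^ r)"
proof (rule fps_ext)
  fix n show "(fps_const 2 * fps_X * oddp r) $ n = (bern_gf ^ r - sc (-1) (bern_gf ^ r)) $ n"
  proof (cases n)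
    case 0 thus ?thesis by (simp add: mult.assoc)
  next
    case (Suc m) thus ?thesis
      by (cases "even m") (simp_all add: mult.assoc oddp_def)
  qed
qed

lemma exp_r: "fps_exp (real r) - 1 = fps_const (real r) * fps_X * sc (real r) GG"
proof -
  have "sc (real r) (fps_X * GG) = sc (real r) (fps_exp 1 - 1)" by (simp only: XGG)
  thus ?thesis by (simp add: sc_X sc_diff sc_exp)
qed

lemma main_fps:
  assumes "r > 0"
  shows "bern_gf ^ r = - fps_const (2 / real r) * oddp r * sc (real r) bern_gf"
proof -
  have "fps_X * (bern_gf ^ r * fps_const (real r) * sc (real r) GG)
      = bern_gf ^ r * (fps_exp (real r) - 1)"
    by (simp add: exp_r ac_simps)
  also have "\<dots> = - (bern_gf ^ r - sc (-1) (bern_gf ^ r))"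
    by (simp add: altFr algebra_simps)
  also have "\<dots> = fps_X * (- (fps_const 2 * oddp r))"
    by (simp add: OO_eq[symmetric] ac_simps)
  finally have 1: "bern_gf ^ r * fps_const (real r) * sc (real r) GG = - (fps_const 2 * oddp r)"
    by (rule X_cancel)
  have "bern_gf ^ r * fps_const (real r) =
        bern_gf ^ r * fps_const (real r) * (sc (real r) GG * sc (real r) bern_gf)"
    using sc_F_G[of "real r"] by (simp add: mult.commute)
  also have "\<dots> = - (fps_const 2 * oddp r) * sc (real r) bern_gf"
    by (simp only: 1 mult.assoc[symmetric])
  finally have 2: "bern_gf ^ r * fps_const (real r) = - (fps_const 2 * oddp r) * sc (real r) bern_gf" .
  have c1: "fps_const (real r) * fps_const (1 / real r) = 1" using assms by simp
  have "bern_gf ^ r = (bern_gf ^ r * fps_const (real r)) * fps_const (1 / real r)"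
    by (simp only: mult.assoc c1 mult_1_right)
  also have "\<dots> = - (fps_const 2 * oddp r) * sc (real r) bern_gf * fps_const (1 / real r)"
    by (simp only: 2)
  also have "\<dots> = - (fps_const 2 * fps_const (1 / real r)) * oddp r * sc (real r) bern_gf"
    by (simp only: mult_minus_left mult_minus_right ac_simps)
  also have "fps_const 2 * fps_const (1 / real r) = fps_const (2 / real r)" by simp
  finally show ?thesis .
qed

lemma GG_ode: "(1 - fps_X) * GG + fps_X * fps_deriv GG = 1"
proof (rule fps_ext)
  fix n
  show "((1 - fps_X) * GG + fps_X * fps_deriv GG) $ n = (1::real fps) $ n"
  proof (cases n)
    case 0 thus ?thesis by (simp add: algebra_simps)
  next
    case (Suc m)
    have "((1 - fps_X) * GG + fps_X * fps_deriv GG) $ n = 1 / fact (Suc (Suc m)) - 1 / fact (Suc m)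
          + real (Suc m) * (1 / fact (Suc (Suc m)))"
      using Suc by (simp add: algebra_simps GG_nth del: fact_Suc)
    also have "\<dots> = 0" by (simp add: field_simps del: of_nat_Suc)
    finally show ?thesis using Suc by simp
  qed
qed

lemma F_deriv: "fps_deriv bern_gf = - fps_deriv GG * bern_gf ^ 2"
  unfolding bern_gf_def by (rule fps_inverse_deriv) simp

lemma F_sq: "bern_gf ^ 2 = (1 - fps_X) * bern_gf - fps_X * fps_deriv bern_gf"
proof -
  have "bern_gf ^ 2 = bern_gf ^ 2 * ((1 - fps_X) * GG + fps_X * fps_deriv GG)"
    by (simp only: GG_ode mult_1_right)
  also have "\<dots> = (1 - fps_X) * bern_gf * (bern_gf * GG) + fps_X * fps_deriv GG * bern_gf ^ 2"
    by (simp add: algebra_simps power2_eq_square)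
  also have "\<dots> = (1 - fps_X) * bern_gf - fps_X * fps_deriv bern_gf"
    by (simp add: F_G' F_deriv)
  finally show ?thesis .
qed

lemma F_rec:
  assumes "r > 0"
  shows "bern_gf ^ Suc r = (1 - fps_X) * bern_gf ^ r - fps_const (1 / real r) * fps_X * fps_deriv (bern_gf ^ r)"
proof -
  obtain q where q: "r = Suc q" using assms by (cases r) auto
  have "bern_gf ^ Suc r = bern_gf ^ q * bern_gf ^ 2" by (simp add: q power2_eq_square)
  also have "\<dots> = (1 - fps_X) * bern_gf ^ r - fps_X * fps_deriv bern_gf * bern_gf ^ q"
    by (simp add: F_sq q algebra_simps)
  also have "fps_X * fps_deriv bern_gf * bern_gf ^ q = fps_const (1 / real r) * fps_X * fps_deriv (bern_gf ^ r)"
  proof -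
    have "fps_const (1 / real r) * fps_X * fps_deriv (bern_gf ^ r) =
       (fps_const (1 / real r) * fps_const (real r)) * fps_X * fps_deriv bern_gf * bern_gf ^ q"
      by (simp only: fps_deriv_power q diff_Suc_1 ac_simps)
    also have "fps_const (1 / real r) * fps_const (real r) = 1" using assms by simp
    finally show ?thesis by simp
  qed
  finally show ?thesis .
qed

lemma c_rec:
  assumes "r > 0" "m > 0"
  shows "(bern_gf ^ Suc r) $ m = (bern_gf ^ r) $ m - (bern_gf ^ r) $ (m - 1)
           - (1 / real r) * real m * (bern_gf ^ r) $ m"
proof -
  obtain k where k: "m = Suc k" using assms by (cases m) auto
  define P where "P = bern_gf ^ r"
  have e: "(1 - fps_X) * P - fps_const (1 / real r) * fps_X * fps_deriv P
      = P - fps_X * P - fps_const (1 / real r) * (fps_X * fps_deriv P)"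
    by (simp only: left_diff_distrib mult_1 mult.assoc)
  have "(bern_gf ^ Suc r) $ m = ((1 - fps_X) * P - fps_const (1 / real r) * fps_X * fps_deriv P) $ m"
    unfolding P_def by (subst F_rec[OF assms(1)]) (rule refl)
  also have "\<dots> = P $ m - P $ (m - 1) - (1 / real r) * (real m * P $ m)"
    unfolding e fps_sub_nth fps_mult_left_const_nth fps_X_mult_nth fps_deriv_nth
    by (simp add: k)
  finally show ?thesis unfolding P_def by (simp only: mult.assoc)
qed

lemma bno: "bernnum_ord r m = fact m * (bern_gf ^ r) $ m"
  by (simp add: bernnum_ord_def bernpoly_ord_def)

lemma B_rec:
  assumes "r > 0" "m > 0"
  shows "bernnum_ord (Suc r) m = (1 - real m / real r) * bernnum_ord r m - real m * bernnum_ord r (m - 1)"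
proof -
  have f: "fact m = real m * fact (m - 1)" using assms fact_reduce by auto
  show ?thesis
    unfolding bno c_rec[OF assms] by (simp add: f algebra_simps)
qed



lemma ss_rec:
  assumes "j > 0"
  shows "sstirling (Suc r) j = sstirling r (j - 1) - real r * sstirling r j"
proof -
  obtain i where i: "j = Suc i" using assms by (cases j) auto
  show ?thesis
  proof (cases "i < r")
    case True
    have e: "r - i = Suc (r - Suc i)" using True by simp
    show ?thesis using True by (simp add: i sstirling_def e algebra_simps)
  next
    case False
    thus ?thesis by (simp add: i sstirling_def)
  qed
qed

lemma ss_0: "r > 0 \<Longrightarrow> sstirling r 0 = 0"
  by (simp add: sstirling_def)

lemma ss_big: "r < j \<Longrightarrow> sstirling r j = 0"
  by (simp add: sstirling_def)

lemma ss_same: "sstirling r r = 1"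
  by (simp add: sstirling_def)

lemma B0: "bernnum_ord r 0 = 1"
  by (simp add: bno fps_power_zeroth F_0)

lemma F1:
  assumes "0 < r" "m < r"
  shows "bernnum_ord r m * real ((r - 1) choose m) = sstirling r (r - m)"
  using assms
proof (induction r arbitrary: m)
  case 0 thus ?case by simp
next
  case (Suc r m)
  show ?case
  proof (cases "m = 0")
    case True thus ?thesis by (simp add: B0 ss_same)
  next
    case False
    hence m0: "m > 0" by simp
    hence r0: "r > 0" using Suc by simp
    have mr: "m \<le> r" using Suc by simp
    have rec: "bernnum_ord (Suc r) m = (1 - real m / real r) * bernnum_ord r m - real m * bernnum_ord r (m - 1)"
      by (rule B_rec[OF r0 m0])
    have t1: "(1 - real m / real r) * bernnum_ord r m * real (r choose m) = sstirling r (r - m)"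
    proof (cases "m = r")
      case True thus ?thesis using r0 by (simp add: ss_0)
    next
      case False
      hence "m < r" using mr by simp
      from Suc.IH[OF r0 this] have ih: "bernnum_ord r m * real ((r - 1) choose m) = sstirling r (r - m)" .
      have "real (r - m) * real (r choose m) = real r * real ((r - 1) choose m)"
        using binomial_absorb_comp[of r m] by (metis of_nat_mult)
      hence "(1 - real m / real r) * real (r choose m) = real ((r - 1) choose m)"
        using r0 mr by (simp add: field_simps of_nat_diff)
      thus ?thesis using ih by (metis mult.commute mult.left_commute)
    qed
    have t2: "real m * bernnum_ord r (m - 1) * real (r choose m) = real r * sstirling r (r - m + 1)"
    proof -
      from Suc.IH[OF r0, of "m - 1"] m0 mr
      have ih: "bernnum_ord r (m - 1) * real ((r - 1) choose (m - 1)) = sstirling r (r - (m - 1))" by simp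
      have "real m * real (r choose m) = real r * real ((r - 1) choose (m - 1))"
        using times_binomial_minus1_eq[OF m0, of r] by (metis of_nat_mult)
      hence "real m * bernnum_ord r (m - 1) * real (r choose m) = real r * (bernnum_ord r (m - 1) * real ((r - 1) choose (m - 1)))"
        by (metis mult.commute mult.left_commute)
      also have "\<dots> = real r * sstirling r (r - (m - 1))" by (simp only: ih)
      also have "r - (m - 1) = r - m + 1" using m0 mr by simp
      finally show ?thesis .
    qed
    have "sstirling (Suc r) (Suc r - m) = sstirling r (r - m) - real r * sstirling r (r - m + 1)"
      using ss_rec[of "Suc r - m" r] mr by (simp add: Suc_diff_le)
    also have "\<dots> = bernnum_ord (Suc r) m * real (Suc r - 1 choose m)"
      using t1 t2 by (simp add: rec algebra_simps)
    finally show ?thesis by simp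
  qed
qed

definition beta :: "nat \<Rightarrow> real" where "beta k = bernnum k / real k"

definition TT :: "nat \<Rightarrow> nat \<Rightarrow> real" where
  "TT r m = (\<Sum>j=1..r. (-1) ^ (j - 1) * sstirling r j * beta (m - r + j))"

lemma TT_rec:
  assumes "0 < r" "Suc r \<le> m"
  shows "TT (Suc r) m = - TT r m - real r * TT r (m - 1)"
proof -
  have "TT (Suc r) m = (\<Sum>j=1..Suc r. (-1) ^ (j - 1) * sstirling r (j - 1) * beta (m - Suc r + j))
      - real r * (\<Sum>j=1..Suc r. (-1) ^ (j - 1) * sstirling r j * beta (m - Suc r + j))"
    unfolding TT_def
    by (simp add: ss_rec sum_subtractf sum_distrib_left algebra_simps)
  also have "(\<Sum>j=1..Suc r. (-1) ^ (j - 1) * sstirling r (j - 1) * beta (m - Suc r + j))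
      = (\<Sum>i=0..r. (-1) ^ i * sstirling r i * beta (m - r + i))"
  proof -
    have "(\<Sum>j=Suc 0..Suc r. (-1) ^ (j - 1) * sstirling r (j - 1) * beta (m - Suc r + j))
        = (\<Sum>i=0..r. (-1) ^ (Suc i - 1) * sstirling r (Suc i - 1) * beta (m - Suc r + Suc i))"
      by (rule sum.shift_bounds_cl_Suc_ivl)
    also have "\<dots> = (\<Sum>i=0..r. (-1) ^ i * sstirling r i * beta (m - r + i))"
    proof (intro sum.cong refl)
      fix i assume "i \<in> {0..r}"
      have "m - Suc r + Suc i = m - r + i" using assms by simp
      thus "(-1) ^ (Suc i - 1) * sstirling r (Suc i - 1) * beta (m - Suc r + Suc i) = (-1) ^ i * sstirling r i * beta (m - r + i)"
        by (simp only: diff_Suc_1)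
    qed
    finally show ?thesis by simp
  qed
  also have "\<dots> = - TT r m"
  proof -
    have "(\<Sum>i=0..r. (-1) ^ i * sstirling r i * beta (m - r + i))
        = (-1) ^ 0 * sstirling r 0 * beta (m - r + 0) + (\<Sum>i=Suc 0..r. (-1) ^ i * sstirling r i * beta (m - r + i))"
      by (rule sum.atLeast_Suc_atMost) simp
    also have "\<dots> = (\<Sum>i=1..r. (-1) ^ i * sstirling r i * beta (m - r + i))"
      using assms by (simp add: ss_0)
    also have "\<dots> = (\<Sum>i=1..r. - ((-1) ^ (i - 1) * sstirling r i * beta (m - r + i)))"
    proof (intro sum.cong refl)
      fix i assume "i \<in> {1..r}"
      then obtain k where "i = Suc k" by (cases i) auto
      thus "(-1) ^ i * sstirling r i * beta (m - r + i) = - ((-1) ^ (i - 1) * sstirling r i * beta (m - r + i))"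
        by simp
    qed
    finally show ?thesis by (simp add: TT_def sum_negf)
  qed
  also have "(\<Sum>j=1..Suc r. (-1) ^ (j - 1) * sstirling r j * beta (m - Suc r + j)) = TT r (m - 1)"
  proof -
    have "(\<Sum>j=1..Suc r. (-1) ^ (j - 1) * sstirling r j * beta (m - Suc r + j))
        = (\<Sum>j=1..r. (-1) ^ (j - 1) * sstirling r j * beta (m - Suc r + j))"
      by (simp add: ss_big)
    also have "\<dots> = TT r (m - 1)" unfolding TT_def
      using assms by (intro sum.cong refl) (simp add: algebra_simps)
    finally show ?thesis .
  qed
  finally show ?thesis by simp
qed

lemma B1: "bernnum_ord (Suc 0) m = bernnum m"
  by (simp add: bernnum_ord_def bernnum_def bernpoly_def)

lemma F2:
  assumes "0 < r" "r \<le> m"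
  shows "bernnum_ord r m = real m * real ((m - 1) choose (r - 1)) * TT r m"
  using assms
proof (induction r arbitrary: m rule: nat_induct_non_zero)
  case 1
  thus ?case by (simp add: TT_def beta_def ss_same B1)
next
  case (Suc r m)
  have m0: "m > 0" "m \<ge> 2" using Suc by auto
  have rec: "bernnum_ord (Suc r) m = (1 - real m / real r) * bernnum_ord r m - real m * bernnum_ord r (m - 1)"
    by (rule B_rec[OF Suc(1) m0(1)])
  have ih1: "bernnum_ord r m = real m * real ((m - 1) choose (r - 1)) * TT r m"
    using Suc by simp
  have ih2: "bernnum_ord r (m - 1) = real (m - 1) * real ((m - 1 - 1) choose (r - 1)) * TT r (m - 1)"
    using Suc by simp
  define a where "a = real ((m - 1) choose (r - 1))"
  define b where "b = real ((m - 1) choose r)"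
  define c where "c = real ((m - 2) choose (r - 1))"
  have mm: "m - 1 - 1 = m - 2" by simp
  have e1n: "r * ((m - 1) choose r) = (m - 1) * ((m - 2) choose (r - 1))"
    using times_binomial_minus1_eq[OF Suc(1), of "m - 1"] unfolding mm .
  have e1: "real r * b = real (m - 1) * c"
    unfolding b_def c_def of_nat_mult[symmetric] e1n ..
  have mr': "m - 1 - (r - 1) = m - r" using Suc(1) by simp
  have e2n: "(m - r) * ((m - 1) choose (r - 1)) = (m - 1) * ((m - 2) choose (r - 1))"
    using binomial_absorb_comp[of "m - 1" "r - 1"] unfolding mr' mm .
  have e2: "real (m - r) * a = real (m - 1) * c"
    unfolding a_def c_def of_nat_mult[symmetric] e2n ..
  have "bernnum_ord (Suc r) m = real m * b * TT (Suc r) m"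
  proof -
    have rr: "real r \<noteq> 0" using Suc by simp
    have mr: "real (m - r) = real m - real r" using Suc by (simp add: of_nat_diff)
    have m1: "real (m - 1) = real m - 1" using m0 by (simp add: of_nat_diff)
    have "bernnum_ord (Suc r) m = (1 - real m / real r) * (real m * a * TT r m)
        - real m * (real (m - 1) * c * TT r (m - 1))"
      using rec ih1 ih2 unfolding a_def c_def by (simp add: numeral_2_eq_2)
    also have "\<dots> = real m * b * (- TT r m - real r * TT r (m - 1))"
    proof -
      have x0: "(real m - real r) * a = real r * b" using e1 e2 unfolding mr by simp
      have x1: "(1 - real m / real r) * a = - b"
      proof -
        have "(1 - real m / real r) * a = - ((real m - real r) * a) / real r"
          using rr by (simp add: field_simps)
        also have "\<dots> = - b" using rr unfolding x0 by simp
        finally show ?thesis .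
      qed
      have "(1 - real m / real r) * (real m * a * TT r m) - real m * (real (m - 1) * c * TT r (m - 1))
          = real m * TT r m * ((1 - real m / real r) * a) - real m * TT r (m - 1) * (real (m - 1) * c)"
        by (simp only: ac_simps)
      also have "\<dots> = real m * TT r m * (- b) - real m * TT r (m - 1) * (real r * b)"
        unfolding x1 e1[symmetric] ..
      also have "\<dots> = real m * b * (- TT r m - real r * TT r (m - 1))"
        by (simp add: algebra_simps)
      finally show ?thesis .
    qed
    finally show ?thesis using TT_rec[OF Suc(1)] Suc by simp
  qed
  thus ?case unfolding b_def by simp
qed



lemma bp: "bernpoly m y = fact m * (bern_gf * fps_exp y) $ m"
  by (simp add: bernpoly_def bernpoly_ord_def)

lemma bpo: "bernpoly_ord r m y = fact m * (bern_gf ^ r * fps_exp y) $ m"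
  by (simp add: bernpoly_ord_def)

lemma coeff_main:
  assumes "r > 0"
  shows "(bern_gf ^ r * fps_exp x) $ n = - (2 / real r) *
     (\<Sum>i=0..n. oddp r $ i * (real r ^ (n - i) * (bern_gf * fps_exp (x / real r)) $ (n - i)))"
proof -
  have "sc (real r) (bern_gf * fps_exp (x / real r)) = sc (real r) bern_gf * fps_exp x"
    using assms by (simp add: sc_mult sc_exp)
  hence "bern_gf ^ r * fps_exp x = fps_const (- (2 / real r)) * (oddp r * sc (real r) (bern_gf * fps_exp (x / real r)))"
    by (subst main_fps[OF assms]) (simp add: ac_simps)
  hence "(bern_gf ^ r * fps_exp x) $ n = (fps_const (- (2 / real r)) * (oddp r * sc (real r) (bern_gf * fps_exp (x / real r)))) $ n"
    by (rule arg_cong)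
  thus ?thesis unfolding fps_mult_left_const_nth fps_mult_nth[of "oddp r"] sc_nth by simp
qed

lemma sum_even:
  fixes g :: "nat \<Rightarrow> real"
  assumes "\<And>i. odd i \<Longrightarrow> g i = 0"
  shows "(\<Sum>i=0..n. g i) = (\<Sum>k\<in>{k. 2 * k \<le> n}. g (2 * k))"
proof -
  have "(\<Sum>i=0..n. g i) = (\<Sum>i\<in>{i\<in>{0..n}. even i}. g i)"
    using assms by (intro sum.mono_neutral_right) auto
  also have "{i\<in>{0..n}. even i} = (\<lambda>k. 2 * k) ` {k. 2 * k \<le> n}"
    by (auto elim!: evenE)
  also have "(\<Sum>i\<in>(\<lambda>k. 2 * k) ` {k. 2 * k \<le> n}. g i) = (\<Sum>k\<in>{k. 2 * k \<le> n}. g (2 * k))"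
    by (subst sum.reindex) (auto simp: inj_on_def)
  finally show ?thesis .
qed

lemma alg:
  fixes r a b q R FF C S P :: real
  assumes "r \<noteq> 0" "a \<noteq> 0" "b \<noteq> 0" "q \<noteq> 0" "R \<noteq> 0"
  shows "FF * (- (2 / r) * (C * (S * P))) = - 2 * (S * R / r) * ((q * a * C) / (R * q) * (FF / (a * b)) * (b * P))"
  using assms by (simp add: field_simps)

lemma part1:
  assumes "0 < r" "0 < n"
  shows "bernpoly_ord r n x = - 2 * real r ^ (n - 1) *
     (\<Sum>k\<in>{k. 2 * k \<le> n}. (bernnum_ord r (2 * k + 1) / (real r ^ (2 * k) * (2 * k + 1))) *
             real (n choose (2 * k)) * bernpoly (n - 2 * k) (x / real r))"
proof -
  let ?p = "\<lambda>m. (bern_gf * fps_exp (x / real r)) $ m"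
  let ?c = "\<lambda>m. (bern_gf ^ r) $ m"
  have "bernpoly_ord r n x = fact n * (- (2 / real r) *
     (\<Sum>k\<in>{k. 2 * k \<le> n}. oddp r $ (2 * k) * (real r ^ (n - 2 * k) * ?p (n - 2 * k))))"
    unfolding bpo coeff_main[OF assms(1)]
    by (subst sum_even) (auto simp: oddp_def)
  also have "\<dots> = - 2 * real r ^ (n - 1) *
     (\<Sum>k\<in>{k. 2 * k \<le> n}. (bernnum_ord r (2 * k + 1) / (real r ^ (2 * k) * (2 * k + 1))) *
             real (n choose (2 * k)) * bernpoly (n - 2 * k) (x / real r))"
    unfolding sum_distrib_left
  proof (intro sum.cong refl)
    fix k assume k: "k \<in> {k. 2 * k \<le> n}"
    hence kn: "2 * k \<le> n" by simp
    have ch: "real (n choose (2 * k)) = fact n / (fact (2 * k) * fact (n - 2 * k))"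
      using kn by (rule binomial_fact)
    have pw: "real r ^ (n - 1) = real r ^ (n - 2 * k) * real r ^ (2 * k) / real r"
    proof (cases n)
      case 0 thus ?thesis using kn assms by simp
    next
      case (Suc n')
      have "real r ^ (n - 2 * k) * real r ^ (2 * k) = real r ^ n"
        using kn by (simp add: power_add[symmetric])
      thus ?thesis using Suc assms by simp
    qed
    have f1: "fact (2 * k + 1) = real (2 * k + 1) * (fact (2 * k) :: real)"
      by (metis Suc_eq_plus1 fact_Suc)
    show "fact n * (- (2 / real r) * (oddp r $ (2 * k) * (real r ^ (n - 2 * k) * ?p (n - 2 * k)))) =
       - 2 * real r ^ (n - 1) * (bernnum_ord r (2 * k + 1) / (real r ^ (2 * k) * (2 * k + 1)) *
            real (n choose (2 * k)) * bernpoly (n - 2 * k) (x / real r))"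
      unfolding ch pw bno bp f1 oddp_def fps_nth_Abs_fps using assms
      by (simp only: if_True even_mult_iff even_numeral simp_thms) (rule alg, simp_all)
  qed
  finally show ?thesis .
qed

theorem mainTheorem7:
  fixes n r :: nat and x :: real
  assumes "2 \<le> r" and "r \<le> n"
  shows "bernpoly_ord r n x =
      - 2 * real r ^ (n - 1) *
          (\<Sum>k\<in>{k. 2 * k + 1 \<le> r - 1}.
             (sstirling r (r - 2 * k - 1) / (real r ^ (2 * k) * (2 * k + 1))) *
             (real (n choose (2 * k)) / real ((r - 1) choose (2 * k + 1))) *
             bernpoly (n - 2 * k) (x / real r))
      - 2 * real r ^ (n - 1) *
          (\<Sum>k\<in>{k. r \<le> 2 * k + 1 \<and> 2 * k \<le> n}.
             (bernnum_ord r (2 * k + 1) / (real r ^ (2 * k) * (2 * k + 1))) *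
             real (n choose (2 * k)) * bernpoly (n - 2 * k) (x / real r))
    \<and> (\<forall>k. r \<le> 2 * k + 1 \<longrightarrow>
          bernnum_ord r (2 * k + 1) / (2 * k + 1) =
            real ((2 * k) choose (r - 1)) *
            (\<Sum>j=1..r. (-1) ^ (j - 1) * sstirling r j *
               bernnum (2 * k + 1 - r + j) / real (2 * k + 1 - r + j)))"
proof
  have r0: "0 < r" and n0: "0 < n" using assms by auto
  define h where "h k = (bernnum_ord r (2 * k + 1) / (real r ^ (2 * k) * (2 * k + 1))) *
             real (n choose (2 * k)) * bernpoly (n - 2 * k) (x / real r)" for k
  define A where "A = {k. 2 * k + 1 \<le> r - 1}"
  define B where "B = {k. r \<le> 2 * k + 1 \<and> 2 * k \<le> n}"
  have AB: "{k. 2 * k \<le> n} = A \<union> B" using assms unfolding A_def B_def by auto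
  have fA: "finite A" unfolding A_def by (rule finite_subset[of _ "{..r}"]) auto
  have fB: "finite B" unfolding B_def by (rule finite_subset[of _ "{..n}"]) auto
  have dAB: "A \<inter> B = {}" unfolding A_def B_def by auto
  have sA: "(\<Sum>k\<in>A. h k) = (\<Sum>k\<in>{k. 2 * k + 1 \<le> r - 1}.
             (sstirling r (r - 2 * k - 1) / (real r ^ (2 * k) * (2 * k + 1))) *
             (real (n choose (2 * k)) / real ((r - 1) choose (2 * k + 1))) *
             bernpoly (n - 2 * k) (x / real r))"
    unfolding A_def
  proof (intro sum.cong refl)
    fix k assume "k \<in> {k. 2 * k + 1 \<le> r - 1}"
    hence k: "2 * k + 1 < r" using assms by auto
    have f: "bernnum_ord r (2 * k + 1) * real ((r - 1) choose (2 * k + 1)) = sstirling r (r - (2 * k + 1))"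
      by (rule F1[OF r0 k])
    have nz: "real ((r - 1) choose (2 * k + 1)) \<noteq> 0" using k by simp
    have e: "r - 2 * k - 1 = r - (2 * k + 1)" by simp
    show "h k = (sstirling r (r - 2 * k - 1) / (real r ^ (2 * k) * (2 * k + 1))) *
             (real (n choose (2 * k)) / real ((r - 1) choose (2 * k + 1))) *
             bernpoly (n - 2 * k) (x / real r)"
      unfolding h_def e f[symmetric] using nz by (simp add: field_simps)
  qed
  have "bernpoly_ord r n x = - 2 * real r ^ (n - 1) * (\<Sum>k\<in>{k. 2 * k \<le> n}. h k)"
    unfolding h_def by (rule part1[OF r0 n0])
  also have "(\<Sum>k\<in>{k. 2 * k \<le> n}. h k) = (\<Sum>k\<in>A. h k) + (\<Sum>k\<in>B. h k)"
    unfolding AB by (rule sum.union_disjoint[OF fA fB dAB])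
  finally show "bernpoly_ord r n x =
      - 2 * real r ^ (n - 1) *
          (\<Sum>k\<in>{k. 2 * k + 1 \<le> r - 1}.
             (sstirling r (r - 2 * k - 1) / (real r ^ (2 * k) * (2 * k + 1))) *
             (real (n choose (2 * k)) / real ((r - 1) choose (2 * k + 1))) *
             bernpoly (n - 2 * k) (x / real r))
      - 2 * real r ^ (n - 1) *
          (\<Sum>k\<in>{k. r \<le> 2 * k + 1 \<and> 2 * k \<le> n}.
             (bernnum_ord r (2 * k + 1) / (real r ^ (2 * k) * (2 * k + 1))) *
             real (n choose (2 * k)) * bernpoly (n - 2 * k) (x / real r))"
    unfolding sA[symmetric] B_def h_def by (simp add: algebra_simps)
next
  have r0: "0 < r" using assms by auto
  show "\<forall>k. r \<le> 2 * k + 1 \<longrightarrow>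
          bernnum_ord r (2 * k + 1) / (2 * k + 1) =
            real ((2 * k) choose (r - 1)) *
            (\<Sum>j=1..r. (-1) ^ (j - 1) * sstirling r j *
               bernnum (2 * k + 1 - r + j) / real (2 * k + 1 - r + j))"
  proof (intro allI impI)
    fix k assume k: "r \<le> 2 * k + 1"
    have "bernnum_ord r (2 * k + 1) = real (2 * k + 1) * real ((2 * k + 1 - 1) choose (r - 1)) * TT r (2 * k + 1)"
      by (rule F2[OF r0 k])
    hence "bernnum_ord r (2 * k + 1) / real (2 * k + 1) = real ((2 * k) choose (r - 1)) * TT r (2 * k + 1)"
      by (simp del: of_nat_add of_nat_Suc)
    thus "bernnum_ord r (2 * k + 1) / real (2 * k + 1) =
            real ((2 * k) choose (r - 1)) *
            (\<Sum>j=1..r. (-1) ^ (j - 1) * sstirling r j *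
               bernnum (2 * k + 1 - r + j) / real (2 * k + 1 - r + j))"
      by (simp add: TT_def beta_def)
  qed
qed

end
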